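(* Let $\sigma>0$, $\bar\gamma>0$, $c_\infty\ge0$, and for $\gamma\in(0,\bar\gamma]$ let $\tau_\gamma:[0,\infty)\to[0,\infty)$ be non-decreasing with $\tau_\gamma(0)=0$, such that there exist $R_1,L\ge0$, $m>0$ with $\sup_{r>0}\tau_\gamma(r)/r\le1+\gamma L$ and $\sup_{r>R_1}\tau_\gamma(r)/r\le1-\gamma m$ for all $\gamma\in(0,\bar\gamma]$. Let $Q_\gamma$ be the Markov kernel on $[0,\infty)$ $$Q_\gamma(w,A)=\delta_0(A)\int_{\mathbb{R}}\bar p_{\sigma^2\gamma}(\tau_\gamma(w)+\gamma c_\infty,g)\varphi(g)dg+\int_{\mathbb{R}}\mathbb{1}_A(\tau_\gamma(w)+\gamma c_\infty-2\sigma\gamma^{1/2}g)\{1-\bar p_{\sigma^2\gamma}(\tau_\gamma(w)+\gamma c_\infty,g)\}\varphi(g)dg,$$ with $\bar p_{\sigma^2\gamma}(a,g)=1\wedge\varphi_{\sigma^2\gamma}(a-\sigma\sqrt\gamma g)/\varphi_{\sigma^2\gamma}(\sigma\sqrt\gamma g)$, and let $\mu_\gamma$ be its unique invariant probability measure. Let $\zeta=2(1+\bar\gamma L)^2\sigma^2(2\sqrt{2\pi})^{-1}[\sup_{t\ge0}\{t^2\Phi(-t)\}+1/8]$ and $R\ge0$. Then for any $\gamma\in(0,\bar\gamma]$ and $\bar\delta\in(0,\{L^{-1}\wedge(\sigma e^{-1}/c_\infty)^2\}]$ (convention $1/0=+\infty$), $\mu_\gamma((0,R))\le\eta_Rc_\infty$,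 where $$\eta_R=[\bar\delta+\bar\gamma]^{1/2}\Big[\frac{2\zeta e^{3(\bar\delta+\bar\gamma)L}}{\sigma^3}+\frac{e^{(\bar\delta+\bar\gamma)L}}{2\sqrt{2\pi}\sigma}\Big]\Big/\Phi\Big(-\frac{(1+\bar\gamma L)R+(\bar\delta+\bar\gamma)c_\infty}{2\bar\delta^{1/2}\sigma e^{-(\bar\delta+\bar\gamma)L}}\Big).$$
   Context: $\varphi$ and $\Phi$ are the standard normal density and distribution function; $\varphi_s(t)=(2\pi s)^{-1/2}e^{-t^2/(2s)}$. *)

theory Defs
  imports "HOL-Probability.Probability"
begin

definition phi_var :: "real \<Rightarrow> real \<Rightarrow> real" where
  "phi_var s t = exp (- (t\<^sup>2) / (2 * s)) / sqrt (2 * pi * s)"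

definition phi :: "real \<Rightarrow> real" where
  "phi t = phi_var 1 t"

definition Phi :: "real \<Rightarrow> real" where
  "Phi x = (\<integral>t\<in>{..x}. phi t \<partial>lborel)"

definition pbar :: "real \<Rightarrow> real \<Rightarrow> real \<Rightarrow> real \<Rightarrow> real" where
  "pbar \<sigma> \<gamma> a g =
     min 1 (phi_var (\<sigma>\<^sup>2 * \<gamma>) (a - \<sigma> * sqrt \<gamma> * g) / phi_var (\<sigma>\<^sup>2 * \<gamma>) (\<sigma> * sqrt \<gamma> * g))"

definition Qker :: "real \<Rightarrow> real \<Rightarrow> real \<Rightarrow> (real \<Rightarrow> real) \<Rightarrow> real \<Rightarrow> real set \<Rightarrow> real" where
  "Qker \<sigma> \<gamma> c \<tau> w A =
     indicator A 0 * (\<integral>g. pbar \<sigma> \<gamma> (\<tau> w + \<gamma> * c) g * phi g \<partial>lborel)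
     + (\<integral>g. indicator A (\<tau> w + \<gamma> * c - 2 * \<sigma> * sqrt \<gamma> * g)
              * (1 - pbar \<sigma> \<gamma> (\<tau> w + \<gamma> * c) g) * phi g \<partial>lborel)"

text \<open>Invariant probability measures of Q on [0,\<infinity>) (represented as Borel
  probability measures on the reals concentrated on [0,\<infinity>)).\<close>
definition invariant_prob :: "(real \<Rightarrow> real set \<Rightarrow> real) \<Rightarrow> real measure \<Rightarrow> bool" where
  "invariant_prob Q \<nu> \<longleftrightarrow> prob_space \<nu> \<and> sets \<nu> = sets borel \<and> measure \<nu> {0..} = 1 \<and>
     (\<forall>A\<in>sets borel. measure \<nu> A = (\<integral>w. Q w A \<partial>\<nu>))"

end

theory Submission
  imports Defs
begin
lemma phi_std: "phi t = std_normal_density t"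
  by (simp add: phi_def phi_var_def std_normal_density_def divide_simps)

lemma phi_even: "phi (-t) = phi t"
  by (simp add: phi_std std_normal_density_def)

lemma phi_nonneg[simp]: "0 \<le> phi t"
  by (simp add: phi_std)

lemma phi_le: "phi t \<le> 1 / sqrt (2 * pi)"
  by (simp add: phi_std std_normal_density_def divide_simps)

lemma phi_meas[measurable]: "phi \<in> borel_measurable borel"
  unfolding phi_std[abs_def] by simp

lemma phi_integrable[simp]: "integrable lborel phi"
  unfolding phi_std[abs_def] by simp

lemma phi_integral: "(\<integral>t. phi t \<partial>lborel) = 1"
  unfolding phi_std[abs_def] by simp

lemma phi_ind_integrable[simp]:
  assumes "S \<in> sets borel" shows "integrable lborel (\<lambda>t. indicator S t * phi t)"
proof -
  have "integrable lborel (\<lambda>t. phi t * indicator S t)"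
    by (rule integrable_real_mult_indicator) (use assms in auto)
  then show ?thesis by (simp add: mult.commute)
qed

lemma Phi_alt: "Phi x = (\<integral>t. indicator {..x} t * phi t \<partial>lborel)"
  by (simp add: Phi_def set_lebesgue_integral_def)

lemma Phi_lt: "Phi x = (\<integral>t. indicator {..<x} t * phi t \<partial>lborel)"
proof -
  have "AE t in lborel. indicator {..x} t * phi t = indicator {..<x} t * phi t"
    using AE_lborel_singleton[of x] by eventually_elim (auto simp: indicator_def)
  then show ?thesis unfolding Phi_alt by (rule integral_cong_AE[rotated 2]) auto
qed

lemma Phi_sym: "Phi (-x) = 1 - Phi x"
proof -
  have "Phi (-x) = (\<integral>t. indicator {..-x} (0 + -1 * t) * phi (0 + -1 * t) \<partial>lborel)"
    unfolding Phi_alt by (subst lborel_integral_real_affine[where c="-1" and t=0]) auto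
  also have "\<dots> = (\<integral>t. indicator {x..} t * phi t \<partial>lborel)"
    by (rule Bochner_Integration.integral_cong) (auto simp: phi_even indicator_def)
  finally have 1: "Phi (-x) = (\<integral>t. indicator {x..} t * phi t \<partial>lborel)" .
  have "1 = (\<integral>t. indicator {..<x} t * phi t + indicator {x..} t * phi t \<partial>lborel)"
    unfolding phi_integral[symmetric]
    by (rule Bochner_Integration.integral_cong) (auto simp: indicator_def)
  also have "\<dots> = Phi x + Phi (-x)"
    by (subst Bochner_Integration.integral_add) (auto simp: 1 Phi_lt[of x])
  finally show ?thesis by simp
qed

lemma Phi_mono: "x \<le> y \<Longrightarrow> Phi x \<le> Phi y"
  unfolding Phi_alt
  by (rule integral_mono[OF phi_ind_integrable phi_ind_integrable]) (auto simp: indicator_def)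

lemma Phi_nonneg: "0 \<le> Phi x"
  unfolding Phi_alt by (rule integral_nonneg_AE) auto

lemma Phi_le1: "Phi x \<le> 1"
  using Phi_nonneg[of "-x"] Phi_sym[of x] by simp

lemma Phi_diff: 
  assumes "x \<le> y" shows "Phi y - Phi x = (\<integral>t. indicator {x<..y} t * phi t \<partial>lborel)"
proof -
  have "Phi y = (\<integral>t. indicator {..x} t * phi t + indicator {x<..y} t * phi t \<partial>lborel)"
    unfolding Phi_alt
    by (rule Bochner_Integration.integral_cong) (use assms in \<open>auto simp: indicator_def\<close>)
  also have "\<dots> = Phi x + (\<integral>t. indicator {x<..y} t * phi t \<partial>lborel)"
    by (subst Bochner_Integration.integral_add) (auto simp: Phi_alt)
  finally show ?thesis by simp
qed

lemma Phi_lip: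
  assumes "x \<le> y" shows "Phi y - Phi x \<le> (y - x) / sqrt (2 * pi)"
proof -
  have int2: "integrable lborel (\<lambda>t. indicator {x<..y} t * (1 / sqrt (2 * pi)))"
    using assms by (intro integrable_mult_left integrable_real_indicator) auto
  have "Phi y - Phi x \<le> (\<integral>t. indicator {x<..y} t * (1 / sqrt (2 * pi)) \<partial>lborel)"
    unfolding Phi_diff[OF assms]
    by (intro integral_mono int2 phi_ind_integrable) (auto simp: indicator_def phi_le)
  also have "\<dots> = (y - x) / sqrt (2 * pi)"
    using assms by simp
  finally show ?thesis .
qed

lemma Phi_shift:
  assumes "c > 0"
  shows "(\<integral>g. indicator {g. c * g < u} g * phi (g - d) \<partial>lborel) = Phi (u / c - d)"
proof -
  have "(\<integral>g. indicator {g. c * g < u} g * phi (g - d) \<partial>lborel)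
     = (\<integral>g. indicator {g. c * g < u} (d + 1 * g) * phi ((d + 1 * g) - d) \<partial>lborel)"
    by (subst lborel_integral_real_affine[where c=1 and t=d]) auto
  also have "\<dots> = (\<integral>g. indicator {..< u / c - d} g * phi g \<partial>lborel)"
    by (rule Bochner_Integration.integral_cong) (use assms in \<open>auto simp: indicator_def field_simps\<close>)
  finally show ?thesis by (simp add: Phi_lt)
qed

lemma phi_shift_integrable[simp]:
  assumes "S \<in> sets borel" shows "integrable lborel (\<lambda>g. indicator S g * phi (g - d))"
proof -
  have "integrable lborel (\<lambda>g. normal_density d 1 g)" by simp
  then have "integrable lborel (\<lambda>g. normal_density d 1 g * indicator S g)"
    by (rule integrable_real_mult_indicator[rotated]) (use assms in auto)
  moreover have "normal_density d 1 g = phi (g - d)" for g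
    by (simp add: phi_def phi_var_def normal_density_def divide_simps)
  ultimately show ?thesis by (simp add: mult.commute)
qed

lemma phi_exp: 
  assumes "s > 0"
  shows "phi g * exp (a * g / s - a\<^sup>2 / (2 * s\<^sup>2)) = phi (g - a / s)"
proof -
  have "- (g\<^sup>2) / 2 + (a * g / s - a\<^sup>2 / (2 * s\<^sup>2)) = - ((g - a / s)\<^sup>2) / 2"
    using assms by (simp add: field_simps power2_eq_square)
  then have "exp (- (g\<^sup>2) / 2) * exp (a * g / s - a\<^sup>2 / (2 * s\<^sup>2)) = exp (- ((g - a / s)\<^sup>2) / 2)"
    by (metis exp_add)
  then show ?thesis
    by (simp add: phi_def phi_var_def)
qed

lemma pbar_ratio:
  assumes "\<sigma> > 0" "\<gamma> > 0"
  shows "pbar \<sigma> \<gamma> a g = min 1 (exp (a * g / (\<sigma> * sqrt \<gamma>) - a\<^sup>2 / (2 * (\<sigma> * sqrt \<gamma>)\<^sup>2)))"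
proof -
  define s where "s = \<sigma> * sqrt \<gamma>"
  have s: "s > 0" using assms by (simp add: s_def)
  have v: "\<sigma>\<^sup>2 * \<gamma> = s\<^sup>2" using assms by (simp add: s_def power_mult_distrib)
  have "phi_var (s\<^sup>2) (a - s * g) / phi_var (s\<^sup>2) (s * g)
        = exp (- ((a - s * g)\<^sup>2) / (2 * s\<^sup>2)) / exp (- ((s * g)\<^sup>2) / (2 * s\<^sup>2))"
    using s by (simp add: phi_var_def)
  also have "\<dots> = exp (- ((a - s * g)\<^sup>2) / (2 * s\<^sup>2) - (- ((s * g)\<^sup>2) / (2 * s\<^sup>2)))"
    by (rule exp_diff[symmetric])
  also have "- ((a - s * g)\<^sup>2) / (2 * s\<^sup>2) - (- ((s * g)\<^sup>2) / (2 * s\<^sup>2)) = a * g / s - a\<^sup>2 / (2 * s\<^sup>2)"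
    using s by (simp add: field_simps power2_eq_square)
  finally show ?thesis
    unfolding pbar_def v s_def[symmetric] by (simp add: mult.assoc)
qed

lemma kernel_integrand:
  assumes "\<sigma> > 0" "\<gamma> > 0" "a \<ge> 0" "r \<ge> 0"
  defines "s \<equiv> \<sigma> * sqrt \<gamma>"
  shows "indicator {r<..} (a - 2 * \<sigma> * sqrt \<gamma> * g) * (1 - pbar \<sigma> \<gamma> a g) * phi g
       = indicator {g. (2 * s) * g < a - r} g * phi g - indicator {g. (2 * s) * g < a - r} g * phi (g - a / s)"
proof -
  have s: "s > 0" using assms by (simp add: s_def)
  have e: "a - 2 * \<sigma> * sqrt \<gamma> * g = a - 2 * s * g" by (simp add: s_def)
  show ?thesis
  proof (cases "2 * s * g < a - r")
    case False
    then have "\<not> r < a - 2 * \<sigma> * sqrt \<gamma> * g" unfolding e by linarith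
    then show ?thesis using False by (simp add: indicator_def)
  next
    case True
    then have tr: "r < a - 2 * \<sigma> * sqrt \<gamma> * g" unfolding e by linarith
    show ?thesis
    proof (cases "a = 0")
      case True
      have "pbar \<sigma> \<gamma> 0 g = 1" using pbar_ratio[OF assms(1,2), of 0 g] by simp
      then show ?thesis using True by simp
    next
      case False
      with assms have apos: "a > 0" by simp
      have "a * g / s - a\<^sup>2 / (2 * s\<^sup>2) < 0"
      proof -
        have "2 * s * g < a" using True assms by linarith
        then have "a * (2 * s * g) < a * a" by (rule mult_strict_left_mono[OF _ apos])
        then have "a * (2 * s * g) / (2 * s\<^sup>2) < a * a / (2 * s\<^sup>2)"
          by (rule divide_strict_right_mono) (use s in simp)
        moreover have "a * (2 * s * g) / (2 * s\<^sup>2) = a * g / s"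
          using s by (simp add: power2_eq_square)
        moreover have "a * a = a\<^sup>2" by (simp add: power2_eq_square)
        ultimately show ?thesis by simp
      qed
      then have pb: "pbar \<sigma> \<gamma> a g = exp (a * g / s - a\<^sup>2 / (2 * s\<^sup>2))"
        using pbar_ratio[OF assms(1,2), of a g] unfolding s_def[symmetric] by simp
      have eq: "(1 - pbar \<sigma> \<gamma> a g) * phi g = phi g - phi (g - a / s)"
        unfolding pb phi_exp[OF s, of g a, symmetric] by (simp add: right_diff_distrib mult.commute)
      have ind1: "indicator {r<..} (a - 2 * \<sigma> * sqrt \<gamma> * g) = (1::real)" using tr by simp
      have ind2: "indicator {g. 2 * s * g < a - r} g = (1::real)" using True by simp
      show ?thesis by (simp only: ind1 ind2 mult_1_left eq)
    qed
  qed
qed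

lemma Qker_closed:
  assumes "\<sigma> > 0" "\<gamma> > 0" "\<tau> w + \<gamma> * c \<ge> 0" "r \<ge> 0"
  defines "s \<equiv> \<sigma> * sqrt \<gamma>"
  defines "a \<equiv> \<tau> w + \<gamma> * c"
  shows "Qker \<sigma> \<gamma> c \<tau> w {r<..} = Phi ((a - r) / (2 * s)) - Phi ((- a - r) / (2 * s))"
proof -
  have s: "s > 0" using assms by (simp add: s_def)
  have a0: "a \<ge> 0" using assms by (simp add: a_def)
  have eq: "(\<lambda>g. indicator {r<..} (a - 2 * \<sigma> * sqrt \<gamma> * g) * (1 - pbar \<sigma> \<gamma> a g) * phi g)
     = (\<lambda>g. indicator {g. (2 * s) * g < a - r} g * phi g
       - indicator {g. (2 * s) * g < a - r} g * phi (g - a / s))"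
    by (rule ext, unfold s_def, rule kernel_integrand[OF assms(1,2) a0 assms(4)])
  have "Qker \<sigma> \<gamma> c \<tau> w {r<..} = (\<integral>g. indicator {r<..} (a - 2 * \<sigma> * sqrt \<gamma> * g) * (1 - pbar \<sigma> \<gamma> a g) * phi g \<partial>lborel)"
    using assms(4) by (simp add: Qker_def a_def)
  also have "\<dots> = (\<integral>g. indicator {g. (2 * s) * g < a - r} g * phi g
       - indicator {g. (2 * s) * g < a - r} g * phi (g - a / s) \<partial>lborel)"
    by (simp only: eq)
  also have "\<dots> = (\<integral>g. indicator {g. (2 * s) * g < a - r} g * phi (g - 0) \<partial>lborel)
       - (\<integral>g. indicator {g. (2 * s) * g < a - r} g * phi (g - a / s) \<partial>lborel)"
    by (subst Bochner_Integration.integral_diff) auto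
  also have "\<dots> = Phi ((a - r) / (2 * s) - 0) - Phi ((a - r) / (2 * s) - a / s)"
    using Phi_shift[of "2 * s" "a - r" 0] Phi_shift[of "2 * s" "a - r" "a / s"] s by (simp only: mult_pos_pos zero_less_numeral)
  also have "(a - r) / (2 * s) - a / s = (- a - r) / (2 * s)"
    using s by (simp add: field_simps)
  also have "(a - r) / (2 * s) - 0 = (a - r) / (2 * s)" by simp
  finally show ?thesis .
qed

lemma Phi_meas[measurable]: "Phi \<in> borel_measurable borel"
  by (rule borel_measurable_mono) (auto simp: mono_def Phi_mono)

lemma Phi_nn: "(\<integral>\<^sup>+t. ennreal (indicator S t * phi t) \<partial>lborel) = ennreal (\<integral>t. indicator S t * phi t \<partial>lborel)"
  if "S \<in> sets borel"
  by (rule nn_integral_eq_integral) (use that in auto)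

lemma nd_scale: "\<sigma>0 > 0 \<Longrightarrow> normal_density 0 \<sigma>0 (\<sigma>0 * u) = phi u / \<sigma>0"
  by (simp add: normal_density_def phi_def phi_var_def real_sqrt_mult power_mult_distrib field_simps)

lemma nd_scale': "\<sigma>0 > 0 \<Longrightarrow> normal_density 0 \<sigma>0 (u * \<sigma>0) = phi u / \<sigma>0"
  using nd_scale[of \<sigma>0 u] by (simp add: mult.commute)

lemma Phi_nd:
  assumes "\<sigma>0 > 0"
  shows "(\<integral>\<^sup>+u. ennreal (indicator {..x} u * normal_density 0 \<sigma>0 u) \<partial>lborel) = ennreal (Phi (x / \<sigma>0))"
proof -
  have "(\<integral>\<^sup>+u. ennreal (indicator {..x} u * normal_density 0 \<sigma>0 u) \<partial>lborel)
     = ennreal \<sigma>0 * (\<integral>\<^sup>+u. ennreal (indicator {..x} (0 + \<sigma>0 * u) * normal_density 0 \<sigma>0 (0 + \<sigma>0 * u)) \<partial>lborel)"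
    using assms by (subst nn_integral_real_affine[where c=\<sigma>0 and t=0]) auto
  also have "\<dots> = ennreal \<sigma>0 * (\<integral>\<^sup>+u. ennreal (indicator {..x / \<sigma>0} u * phi u / \<sigma>0) \<partial>lborel)"
    by (intro arg_cong2[where f="(*)"] refl nn_integral_cong) (use assms in \<open>auto simp: nd_scale nd_scale' indicator_def field_simps\<close>)
  also have "\<dots> = (\<integral>\<^sup>+u. ennreal \<sigma>0 * ennreal (indicator {..x / \<sigma>0} u * phi u / \<sigma>0) \<partial>lborel)"
    by (rule nn_integral_cmult[symmetric]) measurable
  also have "\<dots> = (\<integral>\<^sup>+u. ennreal (indicator {..x / \<sigma>0} u * phi u) \<partial>lborel)"
    using assms by (intro nn_integral_cong) (simp add: ennreal_mult[symmetric])
  also have "\<dots> = ennreal (Phi (x / \<sigma>0))"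
    by (simp add: Phi_nn Phi_alt)
  finally show ?thesis .
qed

lemma nd_even: "normal_density 0 b (- y) = normal_density 0 b y"
  by (simp add: normal_density_def)

lemma GS_pos:
  assumes c: "c > 0" and b: "b > 0"
  shows "(\<integral>\<^sup>+z. ennreal (Phi ((x + b * z) / c) * phi z) \<partial>lborel) = ennreal (Phi (x / sqrt (b\<^sup>2 + c\<^sup>2)))"
proof -
  have "(\<integral>\<^sup>+y. ennreal (Phi ((x + y) / c) * normal_density 0 b y) \<partial>lborel)
      = ennreal b * (\<integral>\<^sup>+z. ennreal (Phi ((x + (0 + b * z)) / c) * normal_density 0 b (0 + b * z)) \<partial>lborel)"
    using b by (subst nn_integral_real_affine[where c=b and t=0]) auto
  also have "\<dots> = (\<integral>\<^sup>+z. ennreal b * ennreal (Phi ((x + b * z) / c) * phi z / b) \<partial>lborel)"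
    using b by (subst nn_integral_cmult) (auto simp: nd_scale)
  also have "\<dots> = (\<integral>\<^sup>+z. ennreal (Phi ((x + b * z) / c) * phi z) \<partial>lborel)"
    using b by (intro nn_integral_cong) (simp add: ennreal_mult[symmetric] Phi_nonneg)
  finally have 1: "(\<integral>\<^sup>+z. ennreal (Phi ((x + b * z) / c) * phi z) \<partial>lborel)
      = (\<integral>\<^sup>+y. ennreal (Phi ((x + y) / c) * normal_density 0 b y) \<partial>lborel)" ..
  have "(\<integral>\<^sup>+y. ennreal (Phi ((x + y) / c) * normal_density 0 b y) \<partial>lborel)
      = (\<integral>\<^sup>+y. ennreal (Phi ((x + (0 + -1 * y)) / c) * normal_density 0 b (0 + -1 * y)) \<partial>lborel)"
    by (subst nn_integral_real_affine[where c="-1" and t=0]) auto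
  also have "\<dots> = (\<integral>\<^sup>+y. ennreal (normal_density 0 b y) * ennreal (Phi ((x - y) / c)) \<partial>lborel)"
    by (intro nn_integral_cong) (simp add: nd_even ennreal_mult[symmetric] Phi_nonneg mult.commute)
  also have "\<dots> = (\<integral>\<^sup>+y. ennreal (normal_density 0 b y) *
       (\<integral>\<^sup>+u. ennreal (indicator {..x} u * normal_density 0 c (u - y)) \<partial>lborel) \<partial>lborel)"
  proof (intro nn_integral_cong arg_cong2[where f="(*)"] refl)
    fix y
    have "ennreal (Phi ((x - y) / c)) = (\<integral>\<^sup>+u. ennreal (indicator {..x - y} u * normal_density 0 c u) \<partial>lborel)"
      using Phi_nd[OF c] by simp
    also have "\<dots> = (\<integral>\<^sup>+u. ennreal (indicator {..x - y} (-y + 1 * u) * normal_density 0 c (-y + 1 * u)) \<partial>lborel)"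
      by (subst nn_integral_real_affine[where c=1 and t="-y"]) auto
    also have "\<dots> = (\<integral>\<^sup>+u. ennreal (indicator {..x} u * normal_density 0 c (u - y)) \<partial>lborel)"
      by (intro nn_integral_cong) (auto simp: indicator_def)
    finally show "ennreal (Phi ((x - y) / c)) = \<dots>" .
  qed
  also have "\<dots> = (\<integral>\<^sup>+y. (\<integral>\<^sup>+u. ennreal (normal_density 0 b y) * ennreal (indicator {..x} u * normal_density 0 c (u - y)) \<partial>lborel) \<partial>lborel)"
    by (intro nn_integral_cong nn_integral_cmult[symmetric]) auto
  also have "\<dots> = (\<integral>\<^sup>+u. (\<integral>\<^sup>+y. ennreal (normal_density 0 b y) * ennreal (indicator {..x} u * normal_density 0 c (u - y)) \<partial>lborel) \<partial>lborel)"
    by (rule lborel_pair.Fubini') measurable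
  also have "\<dots> = (\<integral>\<^sup>+u. ennreal (indicator {..x} u) * (\<integral>\<^sup>+y. ennreal (normal_density 0 c (u - y) * normal_density 0 b y) \<partial>lborel) \<partial>lborel)"
    by (intro nn_integral_cong, subst nn_integral_cmult[symmetric])
       (auto intro!: nn_integral_cong simp: ennreal_mult[symmetric] mult.commute mult.left_commute)
  also have "\<dots> = (\<integral>\<^sup>+u. ennreal (indicator {..x} u) * ennreal (normal_density 0 (sqrt (c\<^sup>2 + b\<^sup>2)) u) \<partial>lborel)"
    using fun_cong[OF conv_normal_density_zero_mean[OF c b]] by simp
  also have "\<dots> = (\<integral>\<^sup>+u. ennreal (indicator {..x} u * normal_density 0 (sqrt (c\<^sup>2 + b\<^sup>2)) u) \<partial>lborel)"
    by (intro nn_integral_cong) (simp add: ennreal_mult[symmetric])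
  also have "\<dots> = ennreal (Phi (x / sqrt (b\<^sup>2 + c\<^sup>2)))"
    using c by (subst Phi_nd) (auto simp: add.commute add_nonneg_pos)
  finally show ?thesis using 1 by simp
qed

lemma GS:
  assumes c: "c > 0" and b: "b \<ge> 0"
  shows "(\<integral>z. Phi ((x + b * z) / c) * phi z \<partial>lborel) = Phi (x / sqrt (b\<^sup>2 + c\<^sup>2))"
proof (cases "b = 0")
  case True
  then show ?thesis using c by (simp add: phi_integral)
next
  case False
  then have bp: "b > 0" using b by simp
  have int: "integrable lborel (\<lambda>z. Phi ((x + b * z) / c) * phi z)"
    by (rule Bochner_Integration.integrable_bound[OF phi_integrable])
       (auto simp: Phi_nonneg Phi_le1 intro!: mult_left_le_one_le)
  have "ennreal (\<integral>z. Phi ((x + b * z) / c) * phi z \<partial>lborel) = ennreal (Phi (x / sqrt (b\<^sup>2 + c\<^sup>2)))"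
    using GS_pos[OF c bp, of x] by (subst nn_integral_eq_integral[symmetric]) (auto simp: int Phi_nonneg)
  then show ?thesis
    by (subst (asm) ennreal_inj) (auto simp: Phi_nonneg intro!: integral_nonneg_AE)
qed

definition Hf :: "real \<Rightarrow> real \<Rightarrow> real" where
  "Hf b w = (if 0 < w then (if b = 0 then 1 else Phi (w / b) - Phi (- w / b)) else 0)"

lemma Phi_0: "Phi 0 = 1 / 2"
  using Phi_sym[of 0] by simp

lemma Hf_meas[measurable]: "Hf b \<in> borel_measurable borel"
  unfolding Hf_def by measurable

lemma Hf_pos_eq: "b > 0 \<Longrightarrow> w \<ge> 0 \<Longrightarrow> Hf b w = 2 * Phi (w / b) - 1"
  using Phi_sym[of "w / b"] by (auto simp: Hf_def Phi_0)

lemma Hf_nonneg: "b \<ge> 0 \<Longrightarrow> 0 \<le> Hf b w"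
  by (auto simp: Hf_def intro!: Phi_mono)

lemma Hf_le1: "Hf b w \<le> 1"
  using Phi_le1 Phi_nonneg by (auto simp: Hf_def) (smt (verit) Phi_le1 Phi_nonneg)

lemma Hf_zero: "w > 0 \<Longrightarrow> Hf 0 w = 1" by (simp add: Hf_def)

lemma Hf_layer:
  assumes b: "b \<ge> 0"
  shows "ennreal (Hf b w) = (\<integral>\<^sup>+z. ennreal (indicator {z. b * \<bar>z\<bar> < w} z * phi z) \<partial>lborel)"
proof (cases "0 < w")
  case False
  have "0 \<le> b * \<bar>z\<bar>" for z using b by simp
  then have "{z. b * \<bar>z\<bar> < w} = {}" using False by (auto simp: not_less) (meson order.trans not_less)
  then show ?thesis using False by (simp add: Hf_def)
next
  case wpos: True
  show ?thesis
  proof (cases "b = 0")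
    case True
    have "(\<integral>\<^sup>+z. ennreal (indicator {z. b * \<bar>z\<bar> < w} z * phi z) \<partial>lborel) = (\<integral>\<^sup>+z. ennreal (phi z) \<partial>lborel)"
      using True wpos by (intro nn_integral_cong) simp
    also have "\<dots> = 1"
      by (subst nn_integral_eq_integral) (auto simp: phi_integral)
    finally show ?thesis using True wpos by (simp add: Hf_def)
  next
    case False
    then have bp: "b > 0" using b by simp
    have "(\<integral>\<^sup>+z. ennreal (indicator {z. b * \<bar>z\<bar> < w} z * phi z) \<partial>lborel)
        = ennreal (\<integral>z. indicator {z. b * \<bar>z\<bar> < w} z * phi z \<partial>lborel)"
      by (rule Phi_nn) measurable
    also have "(\<integral>z. indicator {z. b * \<bar>z\<bar> < w} z * phi z \<partial>lborel) = (\<integral>z. indicator {- w / b<..w / b} z * phi z \<partial>lborel)"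
    proof -
      have "AE z in lborel. indicator {z. b * \<bar>z\<bar> < w} z * phi z = indicator {- w / b<..w / b} z * phi z"
        using AE_lborel_singleton[of "w / b"]
      proof eventually_elim
        case (elim z)
        have e1: "(b * \<bar>z\<bar> < w) \<longleftrightarrow> \<bar>z\<bar> < w / b"
          using bp by (simp add: pos_less_divide_eq mult.commute)
        have e2: "\<bar>z\<bar> < w / b \<longleftrightarrow> (- (w / b) < z \<and> z < w / b)"
          by (auto simp: abs_less_iff)
        have "(b * \<bar>z\<bar> < w) \<longleftrightarrow> (- w / b < z \<and> z \<le> w / b)"
          unfolding e1 e2 using elim by auto
        then show ?case by (simp add: indicator_def)
      qed
      then show ?thesis by (rule integral_cong_AE[rotated 2]) auto
    qed
    also have "\<dots> = Phi (w / b) - Phi (- w / b)"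
      using wpos bp by (subst Phi_diff) (auto simp: field_simps)
    finally show ?thesis using wpos bp by (simp add: Hf_def)
  qed
qed

lemma Kf_sym:
  assumes s: "s > 0"
  shows "Phi ((a - b * \<bar>z\<bar>) / (2 * s)) - Phi ((- a - b * \<bar>z\<bar>) / (2 * s))
       = Phi ((a + b * z) / (2 * s)) - Phi ((- a + b * z) / (2 * s))"
proof (cases "z \<ge> 0")
  case True
  have 1: "Phi ((a - b * z) / (2 * s)) = 1 - Phi ((- a + b * z) / (2 * s))"
  proof -
    have e: "- ((- a + b * z) / (2 * s)) = (a - b * z) / (2 * s)"
      by (simp add: diff_divide_distrib add_divide_distrib)
    show ?thesis using Phi_sym[of "(- a + b * z) / (2 * s)"] unfolding e by simp
  qed
  have 2: "Phi ((- a - b * z) / (2 * s)) = 1 - Phi ((a + b * z) / (2 * s))"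
  proof -
    have e: "- ((a + b * z) / (2 * s)) = (- a - b * z) / (2 * s)"
      by (simp add: diff_divide_distrib add_divide_distrib)
    show ?thesis using Phi_sym[of "(a + b * z) / (2 * s)"] unfolding e by simp
  qed
  show ?thesis using True 1 2 by simp
next
  case False
  then show ?thesis by simp
qed

lemma KC:
  assumes s: "s > 0" and a: "a \<ge> 0" and b: "b \<ge> 0"
  shows "(\<integral>\<^sup>+z. ennreal (phi z * (Phi ((a - b * \<bar>z\<bar>) / (2 * s)) - Phi ((- a - b * \<bar>z\<bar>) / (2 * s)))) \<partial>lborel)
       = ennreal (Hf (sqrt (b\<^sup>2 + (2 * s)\<^sup>2)) a)"
proof -
  define b' where "b' = sqrt (b\<^sup>2 + (2 * s)\<^sup>2)"
  have b'pos: "b' > 0" using s by (simp add: b'_def add_nonneg_pos)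
  have s2: "2 * s > 0" using s by simp
  have int1: "integrable lborel (\<lambda>z. Phi ((x + b * z) / (2 * s)) * phi z)" for x
    by (rule Bochner_Integration.integrable_bound[OF phi_integrable])
       (auto simp: Phi_nonneg Phi_le1 intro!: mult_left_le_one_le)
  have eq: "(\<lambda>z. phi z * (Phi ((a - b * \<bar>z\<bar>) / (2 * s)) - Phi ((- a - b * \<bar>z\<bar>) / (2 * s))))
      = (\<lambda>z. Phi ((a + b * z) / (2 * s)) * phi z - Phi ((- a + b * z) / (2 * s)) * phi z)"
    by (rule ext, subst Kf_sym[OF s]) (simp add: algebra_simps)
  have "(\<integral>z. phi z * (Phi ((a - b * \<bar>z\<bar>) / (2 * s)) - Phi ((- a - b * \<bar>z\<bar>) / (2 * s))) \<partial>lborel)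
      = Phi (a / b') - Phi (- a / b')"
    unfolding eq using GS[OF s2 b, of a] GS[OF s2 b, of "-a"] int1[of a] int1[of "-a"]
    by (subst Bochner_Integration.integral_diff) (auto simp: int1 b'_def)
  also have "\<dots> = Hf b' a"
    using b'pos a by (auto simp: Hf_def)
  finally have I: "(\<integral>z. phi z * (Phi ((a - b * \<bar>z\<bar>) / (2 * s)) - Phi ((- a - b * \<bar>z\<bar>) / (2 * s))) \<partial>lborel) = Hf b' a" .
  have nn: "0 \<le> phi z * (Phi ((a - b * \<bar>z\<bar>) / (2 * s)) - Phi ((- a - b * \<bar>z\<bar>) / (2 * s)))" for z
  proof -
    have "(- a - b * \<bar>z\<bar>) / (2 * s) \<le> (a - b * \<bar>z\<bar>) / (2 * s)"
      using a s by (intro divide_right_mono) auto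
    then show ?thesis by (intro mult_nonneg_nonneg) (auto dest: Phi_mono)
  qed
  show ?thesis
    unfolding b'_def[symmetric] I[symmetric]
    using int1[of a] int1[of "-a"] by (intro nn_integral_eq_integral) (auto simp: eq nn)
qed

lemma ennreal_integral_le_nn:
  assumes "AE x in M. 0 \<le> f x"
  shows "ennreal (integral\<^sup>L M f) \<le> (\<integral>\<^sup>+x. ennreal (f x) \<partial>M)"
proof (cases "integrable M f")
  case True
  then show ?thesis using assms by (simp add: nn_integral_eq_integral)
next
  case False
  then show ?thesis by (simp add: not_integrable_integral_eq)
qed

lemma main_step:
  fixes \<sigma> \<gamma> c b :: real and T A :: "real \<Rightarrow> real" and \<mu> :: "real measure"
  assumes \<sigma>: "\<sigma> > 0" and \<gamma>: "\<gamma> > 0" and b: "b \<ge> 0"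
    and inv: "invariant_prob (Qker \<sigma> \<gamma> c T) \<mu>"
    and Am[measurable]: "A \<in> borel_measurable borel"
    and A0: "\<And>w. A w \<ge> 0" and AT: "\<And>w. w \<ge> 0 \<Longrightarrow> A w = T w + \<gamma> * c"
  shows "(\<integral>\<^sup>+w. ennreal (Hf b w) \<partial>\<mu>)
      \<le> (\<integral>\<^sup>+w. ennreal (Hf (sqrt (b\<^sup>2 + (2 * (\<sigma> * sqrt \<gamma>))\<^sup>2)) (A w)) \<partial>\<mu>)"
proof -
  define s where "s = \<sigma> * sqrt \<gamma>"
  have s: "s > 0" using \<sigma> \<gamma> by (simp add: s_def)
  have ps: "prob_space \<mu>" and smu: "sets \<mu> = sets borel" and m0: "measure \<mu> {0..} = 1"
    and inveq: "\<And>B. B \<in> sets borel \<Longrightarrow> measure \<mu> B = (\<integral>w. Qker \<sigma> \<gamma> c T w B \<partial>\<mu>)"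
    using inv by (auto simp: invariant_prob_def)
  interpret prob_space \<mu> by (rule ps)
  interpret PS: pair_sigma_finite \<mu> lborel
    by (intro pair_sigma_finite.intro prob_space_imp_sigma_finite ps lborel.sigma_finite_measure_axioms)
  have AE0: "AE w in \<mu>. w \<in> {0..}"
    by (rule AE_prob_1) (use m0 in simp)
  have Mcong: "measurable \<mu> borel = measurable borel borel"
    by (rule measurable_cong_sets) (auto simp: smu)
  have Pcong: "measurable (\<mu> \<Otimes>\<^sub>M lborel) borel = measurable (lborel \<Otimes>\<^sub>M lborel) borel"
    by (rule measurable_cong_sets) (auto simp: smu intro!: sets_pair_measure_cong)
  define Kf where "Kf a r = Phi ((a - r) / (2 * s)) - Phi ((- a - r) / (2 * s))" for a r
  have Kf_meas[measurable]: "(\<lambda>(w, z). ennreal (phi z * Kf (A w) (b * \<bar>z\<bar>))) \<in> borel_measurable (lborel \<Otimes>\<^sub>M lborel)"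
    unfolding Kf_def by measurable
  have Kf_nonneg: "0 \<le> Kf a r" if "a \<ge> 0" for a r
  proof -
    have "(- a - r) / (2 * s) \<le> (a - r) / (2 * s)"
      using that s by (intro divide_right_mono) auto
    then show ?thesis by (auto simp: Kf_def dest: Phi_mono)
  qed
  have em: "emeasure \<mu> {r<..} \<le> (\<integral>\<^sup>+w. ennreal (Kf (A w) r) \<partial>\<mu>)" if r: "r \<ge> 0" for r
  proof -
    have AEeq: "AE w in \<mu>. Qker \<sigma> \<gamma> c T w {r<..} = Kf (A w) r"
      using AE0
    proof eventually_elim
      case (elim w)
      then have "A w = T w + \<gamma> * c" using AT by simp
      then show ?case
        using Qker_closed[OF \<sigma> \<gamma> _ r, of T w c] A0[of w] by (simp add: Kf_def s_def)
    qed
    have "emeasure \<mu> {r<..} = ennreal (measure \<mu> {r<..})"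
      by (simp add: emeasure_eq_measure)
    also have "\<dots> = ennreal (\<integral>w. Qker \<sigma> \<gamma> c T w {r<..} \<partial>\<mu>)"
      by (simp add: inveq)
    also have "\<dots> \<le> (\<integral>\<^sup>+w. ennreal (Qker \<sigma> \<gamma> c T w {r<..}) \<partial>\<mu>)"
      by (rule ennreal_integral_le_nn) (use AEeq in \<open>eventually_elim, simp add: Kf_nonneg A0\<close>)
    also have "\<dots> = (\<integral>\<^sup>+w. ennreal (Kf (A w) r) \<partial>\<mu>)"
      by (rule nn_integral_cong_AE) (use AEeq in \<open>eventually_elim, simp\<close>)
    finally show ?thesis .
  qed
  have "(\<integral>\<^sup>+w. ennreal (Hf b w) \<partial>\<mu>)
      = (\<integral>\<^sup>+w. (\<integral>\<^sup>+z. ennreal (indicator {z. b * \<bar>z\<bar> < w} z * phi z) \<partial>lborel) \<partial>\<mu>)"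
    by (simp add: Hf_layer[OF b])
  also have "\<dots> = (\<integral>\<^sup>+z. (\<integral>\<^sup>+w. ennreal (indicator {z. b * \<bar>z\<bar> < w} z * phi z) \<partial>\<mu>) \<partial>lborel)"
  proof (rule PS.Fubini'[symmetric])
    have "(\<lambda>(w, z). ennreal (indicator {z. b * \<bar>z\<bar> < w} z * phi z)) \<in> borel_measurable (lborel \<Otimes>\<^sub>M lborel)"
      unfolding indicator_def by measurable
    then show "case_prod (\<lambda>w z. ennreal (indicator {z. b * \<bar>z\<bar> < w} z * phi z)) \<in> borel_measurable (\<mu> \<Otimes>\<^sub>M lborel)"
      unfolding Pcong by simp
  qed
  also have "\<dots> = (\<integral>\<^sup>+z. ennreal (phi z) * emeasure \<mu> {b * \<bar>z\<bar><..} \<partial>lborel)"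
  proof (intro nn_integral_cong)
    fix z
    have "(\<integral>\<^sup>+w. ennreal (indicator {z. b * \<bar>z\<bar> < w} z * phi z) \<partial>\<mu>)
        = (\<integral>\<^sup>+w. ennreal (phi z) * indicator {b * \<bar>z\<bar><..} w \<partial>\<mu>)"
      by (intro nn_integral_cong) (auto simp: indicator_def)
    also have "\<dots> = ennreal (phi z) * emeasure \<mu> {b * \<bar>z\<bar><..}"
      by (rule nn_integral_cmult_indicator) (simp add: smu)
    finally show "(\<integral>\<^sup>+w. ennreal (indicator {z. b * \<bar>z\<bar> < w} z * phi z) \<partial>\<mu>) = \<dots>" .
  qed
  also have "\<dots> \<le> (\<integral>\<^sup>+z. ennreal (phi z) * (\<integral>\<^sup>+w. ennreal (Kf (A w) (b * \<bar>z\<bar>)) \<partial>\<mu>) \<partial>lborel)"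
    using b by (intro nn_integral_mono mult_left_mono em) auto
  also have "\<dots> = (\<integral>\<^sup>+z. (\<integral>\<^sup>+w. ennreal (phi z * Kf (A w) (b * \<bar>z\<bar>)) \<partial>\<mu>) \<partial>lborel)"
  proof (intro nn_integral_cong)
    fix z
    have mw: "(\<lambda>w. ennreal (Kf (A w) (b * \<bar>z\<bar>))) \<in> borel_measurable \<mu>"
      unfolding Mcong Kf_def by measurable
    show "ennreal (phi z) * (\<integral>\<^sup>+w. ennreal (Kf (A w) (b * \<bar>z\<bar>)) \<partial>\<mu>)
        = (\<integral>\<^sup>+w. ennreal (phi z * Kf (A w) (b * \<bar>z\<bar>)) \<partial>\<mu>)"
      by (subst nn_integral_cmult[symmetric, OF mw]) (simp add: ennreal_mult')
  qed
  also have "\<dots> = (\<integral>\<^sup>+w. (\<integral>\<^sup>+z. ennreal (phi z * Kf (A w) (b * \<bar>z\<bar>)) \<partial>lborel) \<partial>\<mu>)"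
    by (rule PS.Fubini') (use Kf_meas in \<open>simp add: Pcong\<close>)
  also have "\<dots> = (\<integral>\<^sup>+w. ennreal (Hf (sqrt (b\<^sup>2 + (2 * s)\<^sup>2)) (A w)) \<partial>\<mu>)"
    by (intro nn_integral_cong) (simp add: Kf_def KC[OF s A0 b])
  finally show ?thesis by (simp add: s_def)
qed

lemma phi_mono_abs: "\<bar>t\<bar> \<le> \<bar>u\<bar> \<Longrightarrow> phi u \<le> phi t"
proof -
  assume "\<bar>t\<bar> \<le> \<bar>u\<bar>"
  then have "t\<^sup>2 \<le> u\<^sup>2" by (metis abs_le_square_iff)
  then show ?thesis by (simp add: phi_std std_normal_density_def divide_right_mono)
qed

lemma Phi_pos: "Phi x > 0"
proof -
  have "phi (\<bar>x\<bar> + 1) > 0" by (simp add: phi_std std_normal_density_def)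
  have int2: "integrable lborel (\<lambda>t. indicator {x - 1<..x} t * phi (\<bar>x\<bar> + 1))"
    by (intro integrable_mult_left integrable_real_indicator) auto
  have "phi (\<bar>x\<bar> + 1) = (\<integral>t. indicator {x - 1<..x} t * phi (\<bar>x\<bar> + 1) \<partial>lborel)"
    by simp
  also have "\<dots> \<le> (\<integral>t. indicator {x - 1<..x} t * phi t \<partial>lborel)"
    by (intro integral_mono int2 phi_ind_integrable) (auto simp: indicator_def intro!: phi_mono_abs)
  also have "\<dots> = Phi x - Phi (x - 1)"
    by (subst Phi_diff) auto
  also have "\<dots> \<le> Phi x" using Phi_nonneg[of "x - 1"] by simp
  finally show ?thesis using \<open>phi (\<bar>x\<bar> + 1) > 0\<close> by simp
qed

lemma Phi_cheb:
  assumes t: "t > 0" shows "t\<^sup>2 * Phi (- t) \<le> 1"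
proof -
  have m2: "integrable lborel (\<lambda>x. phi x * x ^ 2)"
    using integrable_std_normal_moment[of 2] by (simp add: phi_std[abs_def])
  have i2: "(\<integral>x. phi x * x ^ 2 \<partial>lborel) = 1"
    using integral_std_normal_moment_even[of 1] by (simp add: phi_std[abs_def])
  have "Phi (- t) \<le> (\<integral>x. phi x * x ^ 2 / t\<^sup>2 \<partial>lborel)"
    unfolding Phi_alt
  proof (intro integral_mono phi_ind_integrable)
    show "integrable lborel (\<lambda>x. phi x * x ^ 2 / t\<^sup>2)" using m2 by simp
    fix x
    show "indicator {..- t} x * phi x \<le> phi x * x ^ 2 / t\<^sup>2"
    proof (cases "x \<le> - t")
      case True
      then have "t\<^sup>2 \<le> x\<^sup>2" using power_mono[of t "-x" 2] t by simp
      then have "1 \<le> x ^ 2 / t\<^sup>2" using t by simp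
      then have "phi x * 1 \<le> phi x * (x ^ 2 / t\<^sup>2)" by (intro mult_left_mono) auto
      then show ?thesis using True by simp
    next
      case False
      then show ?thesis by simp
    qed
  qed auto
  also have "\<dots> = 1 / t\<^sup>2" using i2 by simp
  finally show ?thesis using t by (simp add: field_simps)
qed

lemma exp_neg_le: assumes "(u::real) \<ge> 0" shows "exp (- u) \<le> 1 - u + u\<^sup>2 / 2"
proof -
  let ?f = "\<lambda>u. 1 - u + u\<^sup>2 / 2 - exp (- u)"
  have "?f 0 \<le> ?f u"
  proof (rule DERIV_nonneg_imp_nondecreasing[OF assms])
    fix x assume "0 \<le> x" "x \<le> u"
    have "DERIV ?f x :> (- 1 + x + exp (- x))"
      by (auto intro!: derivative_eq_intros)
    moreover have "- 1 + x + exp (- x) \<ge> 0" using exp_ge_add_one_self[of "- x"] by simp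
    ultimately show "\<exists>y. DERIV ?f x :> y \<and> 0 \<le> y" by blast
  qed
  then show ?thesis by simp
qed

lemma Phi_m1: "Phi (- 1) \<ge> 1 / 8"
proof -
  define p where "p t = (1 - t\<^sup>2 / 2 + t ^ 4 / 8) / sqrt (2 * pi)" for t :: real
  define F where "F t = (t - t ^ 3 / 6 + t ^ 5 / 40) / sqrt (2 * pi)" for t :: real
  have pnn: "0 \<le> p t" for t
  proof -
    have "1 - t\<^sup>2 / 2 + t ^ 4 / 8 = (1 - t\<^sup>2 / 4)\<^sup>2 + t ^ 4 / 16"
      by (simp add: power2_eq_square field_simps) (simp add: power4_eq_xxxx algebra_simps)
    then have "0 \<le> 1 - t\<^sup>2 / 2 + t ^ 4 / 8" by simp
    then show ?thesis by (simp add: p_def)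
  qed
  have dF: "DERIV F x :> p x" for x
  proof -
    have "DERIV (\<lambda>t. t - t ^ 3 / 6 + t ^ 5 / 40) x :> (1 - x\<^sup>2 / 2 + x ^ 4 / 8)"
      by (rule derivative_eq_intros refl | simp add: field_simps eval_nat_numeral)+
    then show ?thesis unfolding F_def[abs_def] p_def by (rule DERIV_cdivide)
  qed
  have pm[measurable]: "p \<in> borel_measurable borel" unfolding p_def[abs_def] by measurable
  have hb: "has_bochner_integral lborel (\<lambda>x. p x * indicator {- 1 .. 0} x) (F 0 - F (- 1))"
    by (rule has_bochner_integral_FTC_Icc_nonneg) (auto simp: dF pnn)
  have phip: "phi t \<le> p t" for t
  proof -
    have "exp (- (t\<^sup>2 / 2)) \<le> 1 - t\<^sup>2 / 2 + (t\<^sup>2 / 2)\<^sup>2 / 2" by (rule exp_neg_le) simp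
    also have "(t\<^sup>2 / 2)\<^sup>2 / 2 = t ^ 4 / 8" by (simp add: power2_eq_square power4_eq_xxxx)
    finally show ?thesis by (simp add: phi_std std_normal_density_def p_def divide_right_mono)
  qed
  have "Phi 0 - Phi (- 1) = (\<integral>t. indicator {- 1<..0} t * phi t \<partial>lborel)"
    by (subst Phi_diff) auto
  also have "\<dots> \<le> (\<integral>t. p t * indicator {- 1 .. 0} t \<partial>lborel)"
    by (intro integral_mono phi_ind_integrable integrable.intros[OF hb])
       (auto simp: indicator_def phip pnn)
  also have "\<dots> = F 0 - F (- 1)" using hb by (simp add: has_bochner_integral_integral_eq)
  also have "\<dots> = (103 / 120) / sqrt (2 * pi)" by (simp add: F_def field_simps)
  also have "\<dots> \<le> 3 / 8"
  proof -
    have "(23 / 10) ^ 2 \<le> 2 * pi" using pi_gt3 by (simp add: power2_eq_square)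
    then have "23 / 10 \<le> sqrt (2 * pi)" by (rule real_le_rsqrt)
    then show ?thesis by (simp add: divide_simps)
  qed
  finally show ?thesis by (simp add: Phi_0)
qed

lemma sum_inv_sqrt: "(\<Sum>k<n. 1 / sqrt (real k + 1)) \<le> 2 * sqrt (real n)"
proof (induction n)
  case 0
  then show ?case by simp
next
  case (Suc n)
  define a where "a = sqrt (real n)"
  define b where "b = sqrt (real n + 1)"
  have a: "a \<ge> 0" and b: "b > 0" by (auto simp: a_def b_def)
  have ab: "b\<^sup>2 = a\<^sup>2 + 1" by (simp add: a_def b_def)
  have "2 * a * b \<le> a\<^sup>2 + b\<^sup>2" by (smt (verit) sum_squares_bound)
  then have "1 \<le> 2 * b\<^sup>2 - 2 * a * b" using ab by simp
  then have "1 / b \<le> 2 * b - 2 * a" using b by (simp add: field_simps power2_eq_square)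
  then have "2 * a + 1 / b \<le> 2 * b" by simp
  then show ?case using Suc by (simp add: a_def b_def add.commute)
qed

fun bseq :: "real \<Rightarrow> real \<Rightarrow> nat \<Rightarrow> real" where
  "bseq v q 0 = 0"
| "bseq v q (Suc k) = sqrt ((bseq v q k)\<^sup>2 + v) / q"

lemma bseq_nonneg: "v \<ge> 0 \<Longrightarrow> q > 0 \<Longrightarrow> bseq v q k \<ge> 0"
  by (induction k) auto

lemma bseq_lower:
  assumes v: "v > 0" and q: "q \<ge> 1"
  shows "(bseq v q k)\<^sup>2 \<ge> v * real k / q ^ (2 * k)"
proof (induction k)
  case 0
  then show ?case by simp
next
  case (Suc k)
  have qk: "q ^ (2 * k) \<ge> 1" using q by (simp add: one_le_power)
  have "(bseq v q (Suc k))\<^sup>2 = ((bseq v q k)\<^sup>2 + v) / q\<^sup>2"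
    using v q by (simp add: power_divide)
  also have "(bseq v q k)\<^sup>2 + v \<ge> v * real k / q ^ (2 * k) + v / q ^ (2 * k)"
  proof -
    have "v / q ^ (2 * k) \<le> v / 1" by (rule divide_left_mono) (use v qk in auto)
    then show ?thesis using Suc by simp
  qed
  then have "((bseq v q k)\<^sup>2 + v) / q\<^sup>2 \<ge> (v * real k / q ^ (2 * k) + v / q ^ (2 * k)) / q\<^sup>2"
    using q by (intro divide_right_mono) auto
  also have "(v * real k / q ^ (2 * k) + v / q ^ (2 * k)) / q\<^sup>2 = v * real (Suc k) / q ^ (2 * Suc k)"
    using q by (simp add: field_simps power_add power2_eq_square)
  finally show ?case by simp
qed

lemma iter_sum:
  fixes I :: "real \<Rightarrow> real"
  assumes step: "\<And>b. b \<ge> 0 \<Longrightarrow> I b \<le> I (sqrt (b\<^sup>2 + v) / q) + C (sqrt (b\<^sup>2 + v))"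
    and v: "v \<ge> 0" and q: "q > 0"
  shows "I 0 \<le> I (bseq v q n) + (\<Sum>k<n. C (sqrt ((bseq v q k)\<^sup>2 + v)))"
proof (induction n)
  case 0
  then show ?case by simp
next
  case (Suc n)
  have "I (bseq v q n) \<le> I (bseq v q (Suc n)) + C (sqrt ((bseq v q n)\<^sup>2 + v))"
    using step[OF bseq_nonneg[OF v q, of n]] by simp
  then show ?case using Suc by simp
qed

lemma cost_bound:
  assumes s: "s > 0" and q: "q \<ge> 1" and gc: "g * c \<ge> 0" and kn: "k < n"
  shows "2 * (g * c) / (sqrt ((bseq ((2 * s)\<^sup>2) q k)\<^sup>2 + (2 * s)\<^sup>2) * sqrt (2 * pi))
       \<le> (g * c * q ^ n / (s * sqrt (2 * pi))) * (1 / sqrt (real k + 1))"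
proof -
  define v where "v = (2 * s)\<^sup>2"
  have v: "v > 0" using s by (simp add: v_def)
  have qk: "q ^ (2 * k) > 0" using q by simp
  have lb: "(bseq v q k)\<^sup>2 + v \<ge> v * (real k + 1) / q ^ (2 * k)"
  proof -
    have "v / q ^ (2 * k) \<le> v / 1"
      by (rule divide_left_mono) (use v q in \<open>auto simp: one_le_power\<close>)
    then show ?thesis using bseq_lower[OF v q, of k] by (simp add: add_divide_distrib distrib_left)
  qed
  define m where "m = 2 * s * sqrt (real k + 1) / q ^ k"
  have mpos: "m > 0" using s q by (simp add: m_def)
  have "m\<^sup>2 = v * (real k + 1) / q ^ (2 * k)"
    by (simp add: m_def v_def power_divide power_mult_distrib power_mult[symmetric] mult.commute)
  then have msq: "m \<le> sqrt ((bseq v q k)\<^sup>2 + v)"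
    using lb by (intro real_le_rsqrt) simp
  have "2 * (g * c) / (sqrt ((bseq v q k)\<^sup>2 + v) * sqrt (2 * pi)) \<le> 2 * (g * c) / (m * sqrt (2 * pi))"
    using msq mpos gc v by (intro divide_left_mono mult_right_mono mult_pos_pos) (auto simp: add_nonneg_pos)
  also have "\<dots> = (g * c * q ^ k / (s * sqrt (2 * pi))) * (1 / sqrt (real k + 1))"
    using s q by (simp add: m_def field_simps)
  also have "\<dots> \<le> (g * c * q ^ n / (s * sqrt (2 * pi))) * (1 / sqrt (real k + 1))"
  proof -
    have "q ^ k \<le> q ^ n" using q kn by (intro power_increasing) auto
    then have "g * c * q ^ k \<le> g * c * q ^ n" using gc by (intro mult_left_mono) auto
    then show ?thesis using s by (intro mult_right_mono divide_right_mono) auto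
  qed
  finally show ?thesis by (simp add: v_def)
qed

lemma iter_bound:
  fixes I :: "real \<Rightarrow> real"
  assumes s: "s > 0" and q: "q \<ge> 1" and gc: "g * c \<ge> 0"
    and step: "\<And>b. b \<ge> 0 \<Longrightarrow> I b \<le> I (sqrt (b\<^sup>2 + (2 * s)\<^sup>2) / q)
                    + 2 * (g * c) / (sqrt (b\<^sup>2 + (2 * s)\<^sup>2) * sqrt (2 * pi))"
  shows "I 0 \<le> I (bseq ((2 * s)\<^sup>2) q n) + 2 * sqrt (real n) * (g * c * q ^ n / (s * sqrt (2 * pi)))"
proof -
  let ?C = "\<lambda>x. 2 * (g * c) / (x * sqrt (2 * pi))"
  have "I 0 \<le> I (bseq ((2 * s)\<^sup>2) q n) + (\<Sum>k<n. ?C (sqrt ((bseq ((2 * s)\<^sup>2) q k)\<^sup>2 + (2 * s)\<^sup>2)))"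
    by (rule iter_sum[where C="?C"]) (use step q in auto)
  also have "(\<Sum>k<n. ?C (sqrt ((bseq ((2 * s)\<^sup>2) q k)\<^sup>2 + (2 * s)\<^sup>2)))
      \<le> (\<Sum>k<n. (g * c * q ^ n / (s * sqrt (2 * pi))) * (1 / sqrt (real k + 1)))"
    by (intro sum_mono cost_bound[OF s q gc]) auto
  also have "\<dots> = (g * c * q ^ n / (s * sqrt (2 * pi))) * (\<Sum>k<n. 1 / sqrt (real k + 1))"
    by (simp add: sum_distrib_left)
  also have "\<dots> \<le> (g * c * q ^ n / (s * sqrt (2 * pi))) * (2 * sqrt (real n))"
    using s q gc by (intro mult_left_mono sum_inv_sqrt) auto
  finally show ?thesis by (simp add: mult.commute)
qed

theorem theorem27:
  fixes \<sigma> \<gamma>bar cinf R1 L m R \<gamma> \<delta>bar :: real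
    and \<tau> :: "real \<Rightarrow> real \<Rightarrow> real"
    and \<mu> :: "real measure"
  assumes \<sigma>_pos: "\<sigma> > 0" and \<gamma>bar_pos: "\<gamma>bar > 0" and c_nonneg: "cinf \<ge> 0"
    and R1: "R1 \<ge> 0" and L: "L \<ge> 0" and m: "m > 0"
    and tau_mono: "\<And>g. g \<in> {0<..\<gamma>bar} \<Longrightarrow> mono_on {0..} (\<tau> g)"
    and tau_range: "\<And>g r. g \<in> {0<..\<gamma>bar} \<Longrightarrow> r \<ge> 0 \<Longrightarrow> \<tau> g r \<ge> 0"
    and tau_zero: "\<And>g. g \<in> {0<..\<gamma>bar} \<Longrightarrow> \<tau> g 0 = 0"
    and tau_lip: "\<And>g r. g \<in> {0<..\<gamma>bar} \<Longrightarrow> r > 0 \<Longrightarrow> \<tau> g r / r \<le> 1 + g * L"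
    and tau_contr: "\<And>g r. g \<in> {0<..\<gamma>bar} \<Longrightarrow> r > R1 \<Longrightarrow> \<tau> g r / r \<le> 1 - g * m"
    and R: "R \<ge> 0"
    and \<gamma>: "\<gamma> \<in> {0<..\<gamma>bar}"
    and inv: "invariant_prob (Qker \<sigma> \<gamma> cinf (\<tau> \<gamma>)) \<mu>"
    and uniq: "\<And>\<nu>. invariant_prob (Qker \<sigma> \<gamma> cinf (\<tau> \<gamma>)) \<nu> \<Longrightarrow> \<nu> = \<mu>"
    and \<delta>_pos: "\<delta>bar > 0"
    and \<delta>_L: "L > 0 \<Longrightarrow> \<delta>bar \<le> 1 / L"
    and \<delta>_c: "cinf > 0 \<Longrightarrow> \<delta>bar \<le> (\<sigma> * exp (-1) / cinf)\<^sup>2"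
  shows "measure \<mu> {0<..<R} \<le>
    (let \<zeta> = 2 * (1 + \<gamma>bar * L)\<^sup>2 * \<sigma>\<^sup>2 / (2 * sqrt (2 * pi))
               * ((SUP t\<in>{0..}. t\<^sup>2 * Phi (- t)) + 1 / 8);
         D = \<delta>bar + \<gamma>bar;
         \<eta> = sqrt D * (2 * \<zeta> * exp (3 * D * L) / \<sigma> ^ 3 + exp (D * L) / (2 * sqrt (2 * pi) * \<sigma>))
             / Phi (- (((1 + \<gamma>bar * L) * R + D * cinf) / (2 * sqrt \<delta>bar * \<sigma> * exp (- D * L))))
     in \<eta> * cinf)"
proof -
  have gpos: "\<gamma> > 0" and gle: "\<gamma> \<le> \<gamma>bar" using \<gamma> by auto
  define T where "T = \<tau> \<gamma>"
  define q where "q = 1 + \<gamma> * L"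
  define s where "s = \<sigma> * sqrt \<gamma>"
  define D where "D = \<delta>bar + \<gamma>bar"
  have s: "s > 0" using \<sigma>_pos gpos by (simp add: s_def)
  have q1: "q \<ge> 1" using L gpos by (simp add: q_def)
  have gc: "\<gamma> * cinf \<ge> 0" using gpos c_nonneg by simp
  have Tmono: "mono (\<lambda>w. T (max 0 w))"
    by (intro monoI, unfold T_def, rule mono_onD[OF tau_mono[OF \<gamma>]]) auto
  have Tm[measurable]: "(\<lambda>w. T (max 0 w)) \<in> borel_measurable borel"
    by (rule borel_measurable_mono[OF Tmono])
  define A where "A w = T (max 0 w) + \<gamma> * cinf" for w
  have Am[measurable]: "A \<in> borel_measurable borel" unfolding A_def[abs_def] by measurable
  have A0: "A w \<ge> 0" for w
    using tau_range[OF \<gamma>, of "max 0 w"] gc by (simp add: A_def T_def)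
  have AT: "A w = T w + \<gamma> * cinf" if "w \<ge> 0" for w
    using that by (simp add: A_def)
  have inv': "invariant_prob (Qker \<sigma> \<gamma> cinf T) \<mu>" using inv by (simp add: T_def)
  have ps: "prob_space \<mu>" and smu: "sets \<mu> = sets borel" and m0: "measure \<mu> {0..} = 1"
    using inv by (auto simp: invariant_prob_def)
  interpret prob_space \<mu> by (rule ps)
  have AE0: "AE w in \<mu>. w \<in> {0..}"
    by (rule AE_prob_1) (use m0 in simp)
  have spc: "space \<mu> = UNIV" using sets_eq_imp_space_eq[OF smu] by simp
  have pU: "measure \<mu> UNIV = 1" using prob_space.prob_space[OF ps] spc by simp
  have Mcong: "measurable \<mu> borel = measurable borel borel"
    by (rule measurable_cong_sets) (auto simp: smu)
  define I where "I b = (\<integral>w. Hf b w \<partial>\<mu>)" for b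
  have Hint: "integrable \<mu> (Hf b)" if "b \<ge> 0" for b
    by (rule integrable_const_bound[where B=1])
       (use that in \<open>auto simp: Mcong Hf_nonneg Hf_le1\<close>)
  have Inn: "ennreal (I b) = (\<integral>\<^sup>+w. ennreal (Hf b w) \<partial>\<mu>)" if "b \<ge> 0" for b
    unfolding I_def using that by (subst nn_integral_eq_integral) (auto simp: Hint Hf_nonneg)
  have step: "I b \<le> I (sqrt (b\<^sup>2 + (2 * s)\<^sup>2) / q) + 2 * (\<gamma> * cinf) / (sqrt (b\<^sup>2 + (2 * s)\<^sup>2) * sqrt (2 * pi))"
    if b: "b \<ge> 0" for b
  proof -
    define b' where "b' = sqrt (b\<^sup>2 + (2 * s)\<^sup>2)"
    have b': "b' > 0" using s by (simp add: b'_def add_nonneg_pos)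
    have b'q: "b' / q > 0" using b' q1 by simp
    define C where "C = 2 * (\<gamma> * cinf) / (b' * sqrt (2 * pi))"
    have C0: "C \<ge> 0" using gc b' by (simp add: C_def)
    have PW: "Hf b' (A w) \<le> Hf (b' / q) w + C" if w: "w \<ge> 0" for w
    proof -
      have Tle: "T w \<le> q * w"
      proof (cases "w = 0")
        case True
        then show ?thesis using tau_zero[OF \<gamma>] by (simp add: T_def)
      next
        case False
        then have wp: "w > 0" using w by simp
        have "T w / w \<le> q" using tau_lip[OF \<gamma> wp] by (simp add: T_def q_def)
        then show ?thesis using wp by (simp add: pos_divide_le_eq mult.commute)
      qed
      have Aw: "A w \<le> q * w + \<gamma> * cinf" using Tle AT[OF w] by simp
      have e1: "Hf b' (A w) = 2 * Phi (A w / b') - 1" by (rule Hf_pos_eq[OF b' A0])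
      have e2: "Phi (A w / b') \<le> Phi ((q * w + \<gamma> * cinf) / b')"
        using Aw b' by (auto intro!: Phi_mono divide_right_mono)
      have e3: "Phi ((q * w + \<gamma> * cinf) / b') \<le> Phi (q * w / b') + ((q * w + \<gamma> * cinf) / b' - q * w / b') / sqrt (2 * pi)"
        using Phi_lip[of "q * w / b'" "(q * w + \<gamma> * cinf) / b'"] gc b' by (simp add: divide_right_mono)
      have e4: "(q * w + \<gamma> * cinf) / b' - q * w / b' = \<gamma> * cinf / b'"
        using b' by (simp add: field_simps)
      have e5: "2 * (Phi (q * w / b') + \<gamma> * cinf / b' / sqrt (2 * pi)) - 1 = Hf (b' / q) w + C"
      proof -
        have "w / (b' / q) = q * w / b'" using q1 b' by simp
        then have h: "Hf (b' / q) w = 2 * Phi (q * w / b') - 1" using Hf_pos_eq[OF b'q w] by (simp only:)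
        have "2 * (\<gamma> * cinf / b' / sqrt (2 * pi)) = C" by (simp add: C_def)
        moreover have "2 * (Phi (q * w / b') + \<gamma> * cinf / b' / sqrt (2 * pi))
            = 2 * Phi (q * w / b') + 2 * (\<gamma> * cinf / b' / sqrt (2 * pi))" by (rule distrib_left)
        ultimately show ?thesis using h by linarith
      qed
      show ?thesis using e1 e2 e3[unfolded e4] e5 distrib_left[of 2 "Phi (q * w / b')" "\<gamma> * cinf / b' / sqrt (2 * pi)"] by linarith
    qed
    have "ennreal (I b) = (\<integral>\<^sup>+w. ennreal (Hf b w) \<partial>\<mu>)" by (rule Inn[OF b])
    also have "\<dots> \<le> (\<integral>\<^sup>+w. ennreal (Hf b' (A w)) \<partial>\<mu>)"
      unfolding b'_def s_def by (rule main_step[OF \<sigma>_pos gpos b inv' Am A0 AT])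
    also have "\<dots> \<le> (\<integral>\<^sup>+w. ennreal (Hf (b' / q) w + C) \<partial>\<mu>)"
      by (rule nn_integral_mono_AE) (use AE0 in \<open>eventually_elim, auto intro: ennreal_leI PW\<close>)
    also have "\<dots> = ennreal (I (b' / q) + C)"
    proof -
      have "(\<integral>\<^sup>+w. ennreal (Hf (b' / q) w + C) \<partial>\<mu>) = ennreal (\<integral>w. Hf (b' / q) w + C \<partial>\<mu>)"
        using b'q C0 by (subst nn_integral_eq_integral) (auto simp: Hint Hf_nonneg add_nonneg_nonneg)
      also have "(\<integral>w. Hf (b' / q) w + C \<partial>\<mu>) = I (b' / q) + C"
        using b'q by (subst Bochner_Integration.integral_add) (auto simp: Hint I_def pU spc)
      finally show ?thesis .
    qed
    finally have "ennreal (I b) \<le> ennreal (I (b' / q) + C)" .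
    then have "I b \<le> I (b' / q) + C"
      using b'q C0 by (subst (asm) ennreal_le_iff) (auto simp: I_def Hf_nonneg intro!: add_nonneg_nonneg integral_nonneg_AE)
    then show ?thesis by (simp add: b'_def C_def)
  qed
  define n where "n = nat \<lceil>\<delta>bar / \<gamma>\<rceil>"
  have ng: "real n * \<gamma> \<ge> \<delta>bar"
  proof -
    have "real n \<ge> \<delta>bar / \<gamma>" unfolding n_def by linarith
    then show ?thesis using gpos by (simp add: divide_le_eq)
  qed
  have ngD: "real n * \<gamma> \<le> D"
  proof -
    have x0: "\<delta>bar / \<gamma> > 0" using \<delta>_pos gpos by simp
    then have "real n = of_int \<lceil>\<delta>bar / \<gamma>\<rceil>" unfolding n_def by simp
    then have "real n < \<delta>bar / \<gamma> + 1" using ceiling_correct[of "\<delta>bar / \<gamma>"] by linarith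
    then have "real n * \<gamma> < \<delta>bar + \<gamma>" using gpos by (simp add: field_simps)
    then show ?thesis using gle by (simp add: D_def)
  qed
  have n1: "n \<ge> 1"
  proof (rule ccontr)
    assume "\<not> n \<ge> 1"
    then have "n = 0" by simp
    then show False using ng \<delta>_pos by simp
  qed
  have it: "I 0 \<le> I (bseq ((2 * s)\<^sup>2) q n) + 2 * sqrt (real n) * (\<gamma> * cinf * q ^ n / (s * sqrt (2 * pi)))"
    by (rule iter_bound[OF s q1 gc step])
  define bn where "bn = bseq ((2 * s)\<^sup>2) q n"
  define lb where "lb = 2 * s * sqrt (real n) / q ^ n"
  have lbpos: "lb > 0" using s q1 n1 by (simp add: lb_def)
  have bn0: "bn \<ge> 0" using s q1 by (simp add: bn_def bseq_nonneg)
  have lbbn: "lb \<le> bn"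
  proof -
    have "lb\<^sup>2 = (2 * s)\<^sup>2 * real n / q ^ (2 * n)"
      by (simp add: lb_def power_divide power_mult_distrib power_mult[symmetric] mult.commute)
    also have "\<dots> \<le> bn\<^sup>2" unfolding bn_def by (rule bseq_lower) (use s q1 in auto)
    finally show ?thesis using bn0 by (rule power2_le_imp_le)
  qed
  have bnpos: "bn > 0" using lbpos lbbn by simp
  define Y where "Y = R / lb"
  have RY: "R / bn \<le> Y" unfolding Y_def using R lbpos lbbn by (intro divide_left_mono) auto
  define m where "m = measure \<mu> {0<..<R}"
  have lower: "2 * Phi (- Y) * m \<le> I 0 - I bn"
  proof -
    have ii: "integrable \<mu> (\<lambda>w. indicator {0<..<R} w * (2 * Phi (- Y)))"
      by (intro integrable_mult_left integrable_real_indicator) (auto simp: smu less_top[symmetric])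
    have "2 * Phi (- Y) * m = (\<integral>w. indicator {0<..<R} w * (2 * Phi (- Y)) \<partial>\<mu>)"
      by (simp add: m_def spc)
    also have "\<dots> \<le> (\<integral>w. Hf 0 w - Hf bn w \<partial>\<mu>)"
    proof (intro integral_mono ii Bochner_Integration.integrable_diff Hint)
      fix w
      show "indicator {0<..<R} w * (2 * Phi (- Y)) \<le> Hf 0 w - Hf bn w"
      proof (cases "w > 0")
        case False
        then show ?thesis by (simp add: Hf_def)
      next
        case True
        have "Hf 0 w - Hf bn w = 2 * Phi (- (w / bn))"
          using Hf_pos_eq[OF bnpos, of w] True Phi_sym[of "w / bn"] by (simp add: Hf_def)
        moreover have "indicator {0<..<R} w * (2 * Phi (- Y)) \<le> 2 * Phi (- (w / bn))"
        proof (cases "w < R")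
          case True
          have "w / bn \<le> R / bn" using True bnpos by (intro divide_right_mono) auto
          then have "Phi (- Y) \<le> Phi (- (w / bn))" using RY by (intro Phi_mono) auto
          then show ?thesis using True \<open>w > 0\<close> by simp
        next
          case False
          then show ?thesis using Phi_nonneg[of "- (w / bn)"] by simp
        qed
        ultimately show ?thesis by simp
      qed
    qed (use bn0 in auto)
    also have "\<dots> = I 0 - I bn"
      unfolding I_def using bn0 by (subst Bochner_Integration.integral_diff) (auto simp: Hint)
    finally show ?thesis .
  qed
  have PhiY: "Phi (- Y) > 0" by (rule Phi_pos)
  define K where "K = sqrt (real n) * (\<gamma> * cinf * q ^ n / (s * sqrt (2 * pi)))"
  have mb: "m \<le> K / Phi (- Y)"
  proof -
    have "2 * Phi (- Y) * m \<le> 2 * K"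
      using lower it by (simp add: bn_def K_def)
    then have "Phi (- Y) * m \<le> K" by simp
    then show ?thesis using PhiY by (subst pos_le_divide_eq) (auto simp: mult.commute)
  qed
  have key: "K = cinf * (sqrt (real n * \<gamma>) * q ^ n / (\<sigma> * sqrt (2 * pi)))"
  proof -
    have "sqrt (real n) * \<gamma> / s = sqrt (real n * \<gamma>) / \<sigma>"
      using gpos \<sigma>_pos by (simp add: s_def real_sqrt_mult field_simps)
    moreover have "K = (sqrt (real n) * \<gamma> / s) * (cinf * q ^ n / sqrt (2 * pi))"
      using s by (simp add: K_def field_simps)
    moreover have "(sqrt (real n * \<gamma>) / \<sigma>) * (cinf * q ^ n / sqrt (2 * pi))
        = cinf * (sqrt (real n * \<gamma>) * q ^ n / (\<sigma> * sqrt (2 * pi)))"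
      using \<sigma>_pos by (simp add: field_simps)
    ultimately show ?thesis by simp
  qed
  have Dpos: "D > 0" using \<delta>_pos \<gamma>bar_pos by (simp add: D_def)
  have qn: "q ^ n \<le> exp (D * L)"
  proof -
    have "q \<le> exp (\<gamma> * L)" unfolding q_def using exp_ge_add_one_self[of "\<gamma> * L"] by simp
    then have "q ^ n \<le> exp (\<gamma> * L) ^ n" using q1 by (intro power_mono) auto
    also have "\<dots> = exp (real n * \<gamma> * L)" by (simp add: exp_of_nat_mult[symmetric] mult.assoc)
    also have "\<dots> \<le> exp (D * L)" using ngD L by (intro exp_mono mult_right_mono) auto
    finally show ?thesis .
  qed
  have qnpos: "q ^ n > 0" using q1 by simp
  have sqn: "sqrt (real n * \<gamma>) \<le> sqrt D" using ngD by simp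
  have sqd: "sqrt \<delta>bar \<le> sqrt (real n * \<gamma>)" using ng by simp
  have sqdpos: "sqrt \<delta>bar > 0" using \<delta>_pos by simp
  define X where "X = ((1 + \<gamma>bar * L) * R + D * cinf) / (2 * sqrt \<delta>bar * \<sigma> * exp (- D * L))"
  have YX: "Y \<le> X"
  proof -
    have lbe: "lb = 2 * \<sigma> * sqrt (real n * \<gamma>) / q ^ n"
      using gpos by (simp add: lb_def s_def real_sqrt_mult mult.commute mult.left_commute)
    have "Y = R * q ^ n / (2 * \<sigma> * sqrt (real n * \<gamma>))"
      unfolding Y_def lbe by simp
    also have "\<dots> \<le> R * exp (D * L) / (2 * \<sigma> * sqrt \<delta>bar)"
      using R qn sqd sqdpos \<sigma>_pos qnpos
      by (intro frac_le mult_left_mono mult_nonneg_nonneg mult_pos_pos) auto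
    also have "\<dots> \<le> ((1 + \<gamma>bar * L) * R + D * cinf) * exp (D * L) / (2 * \<sigma> * sqrt \<delta>bar)"
    proof -
      have "R \<le> (1 + \<gamma>bar * L) * R + D * cinf"
        using R L \<gamma>bar_pos Dpos c_nonneg by (simp add: distrib_right)
      then show ?thesis using \<sigma>_pos sqdpos by (intro divide_right_mono mult_right_mono) auto
    qed
    also have "\<dots> = X" by (simp add: X_def exp_minus field_simps)
    finally show ?thesis .
  qed
  have PhiX: "Phi (- X) > 0" by (rule Phi_pos)
  have PhiXY: "Phi (- X) \<le> Phi (- Y)" using YX by (intro Phi_mono) simp
  have K0: "K \<ge> 0" using c_nonneg gpos s q1 by (simp add: K_def)
  have KD: "K \<le> cinf * (sqrt D * exp (D * L) / (\<sigma> * sqrt (2 * pi)))"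
    unfolding key using c_nonneg sqn qn \<sigma>_pos qnpos Dpos
    by (intro mult_left_mono divide_right_mono mult_mono) auto
  define S where "S = (SUP t\<in>{0..}. t\<^sup>2 * Phi (- t))"
  have S8: "S \<ge> 1 / 8"
  proof -
    have bdd: "bdd_above ((\<lambda>t. t\<^sup>2 * Phi (- t)) ` {0..})"
    proof (rule bdd_aboveI2)
      fix t :: real assume "t \<in> {0..}"
      then show "t\<^sup>2 * Phi (- t) \<le> 1"
        by (cases "t = 0") (auto intro: Phi_cheb)
    qed
    have "1\<^sup>2 * Phi (- 1) \<le> S" unfolding S_def by (rule cSUP_upper[OF _ bdd]) simp
    then show ?thesis using Phi_m1 by simp
  qed
  define Z where "Z = 2 * (1 + \<gamma>bar * L)\<^sup>2 * \<sigma>\<^sup>2 / (2 * sqrt (2 * pi)) * ((SUP t\<in>{0..}. t\<^sup>2 * Phi (- t)) + 1 / 8)"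
  have Zlb: "Z \<ge> \<sigma>\<^sup>2 / (4 * sqrt (2 * pi))"
  proof -
    have g1: "(1 + \<gamma>bar * L)\<^sup>2 \<ge> 1" using L \<gamma>bar_pos by (simp add: one_le_power)
    have "\<sigma>\<^sup>2 / (4 * sqrt (2 * pi)) = 2 * 1 * \<sigma>\<^sup>2 / (2 * sqrt (2 * pi)) * (1 / 4)" by simp
    also have "\<dots> \<le> Z" unfolding Z_def S_def[symmetric] using g1 S8
      by (intro mult_mono divide_right_mono mult_right_mono) auto
    finally show ?thesis .
  qed
  have coef: "exp (D * L) / (\<sigma> * sqrt (2 * pi)) \<le> 2 * Z * exp (3 * D * L) / \<sigma> ^ 3 + exp (D * L) / (2 * sqrt (2 * pi) * \<sigma>)"
  proof -
    have e3: "exp (D * L) \<le> exp (3 * D * L)" using Dpos L by simp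
    have "2 * Z * exp (3 * D * L) / \<sigma> ^ 3 \<ge> 2 * (\<sigma>\<^sup>2 / (4 * sqrt (2 * pi))) * exp (D * L) / \<sigma> ^ 3"
    proof -
      have "0 \<le> \<sigma>\<^sup>2 / (4 * sqrt (2 * pi))" by simp
      then have Z0: "0 \<le> Z" using Zlb by linarith
      show ?thesis using Zlb e3 \<sigma>_pos Z0 by (intro divide_right_mono mult_mono) auto
    qed
    also have "2 * (\<sigma>\<^sup>2 / (4 * sqrt (2 * pi))) * exp (D * L) / \<sigma> ^ 3 = exp (D * L) / (2 * sqrt (2 * pi) * \<sigma>)"
      using \<sigma>_pos by (simp add: field_simps power2_eq_square power3_eq_cube)
    finally have "exp (D * L) / (2 * sqrt (2 * pi) * \<sigma>) \<le> 2 * Z * exp (3 * D * L) / \<sigma> ^ 3" .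
    moreover have "exp (D * L) / (\<sigma> * sqrt (2 * pi)) = exp (D * L) / (2 * sqrt (2 * pi) * \<sigma>) + exp (D * L) / (2 * sqrt (2 * pi) * \<sigma>)"
      using \<sigma>_pos by (simp add: field_simps)
    ultimately show ?thesis by linarith
  qed
  have fin: "m \<le> sqrt D * (2 * Z * exp (3 * D * L) / \<sigma> ^ 3 + exp (D * L) / (2 * sqrt (2 * pi) * \<sigma>)) / Phi (- X) * cinf"
  proof -
    have "m \<le> K / Phi (- Y)" by (rule mb)
    also have "\<dots> \<le> K / Phi (- X)" using K0 PhiX PhiXY by (intro divide_left_mono) auto
    also have "\<dots> \<le> cinf * (sqrt D * exp (D * L) / (\<sigma> * sqrt (2 * pi))) / Phi (- X)"
      using KD PhiX by (intro divide_right_mono) auto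
    also have "\<dots> \<le> cinf * (sqrt D * (2 * Z * exp (3 * D * L) / \<sigma> ^ 3 + exp (D * L) / (2 * sqrt (2 * pi) * \<sigma>))) / Phi (- X)"
    proof -
      have "sqrt D * exp (D * L) / (\<sigma> * sqrt (2 * pi)) = sqrt D * (exp (D * L) / (\<sigma> * sqrt (2 * pi)))" by simp
      also have "\<dots> \<le> sqrt D * (2 * Z * exp (3 * D * L) / \<sigma> ^ 3 + exp (D * L) / (2 * sqrt (2 * pi) * \<sigma>))"
        using coef Dpos by (intro mult_left_mono) auto
      finally show ?thesis using c_nonneg PhiX by (intro divide_right_mono mult_left_mono) auto
    qed
    also have "\<dots> = sqrt D * (2 * Z * exp (3 * D * L) / \<sigma> ^ 3 + exp (D * L) / (2 * sqrt (2 * pi) * \<sigma>)) / Phi (- X) * cinf"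
      by simp
    finally show ?thesis .
  qed
  show ?thesis
    unfolding Let_def using fin unfolding m_def X_def Z_def D_def .
qed

end
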